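(* Let $\mathsf{Mono(Ab)}$ denote the full subcategory of $\mathsf{PreOrdGrp}$ consisting of the preordered groups $(G,P_G)$ with $G$ abelian and $P_G$ a subgroup of $G$. The inclusion $U\colon\mathsf{Mono(Ab)}\to\mathsf{PreOrdGrp}$ has a left adjoint $F$ given on objects by $F(G,P_G)=(G/[G,G],\ grp(\eta_G(P_G)))$, where $\eta_G\colon G\to G/[G,G]$ is the abelianization quotient and $grp(\eta_G(P_G))$ is identified with the subgroup $\{x-y : x,y\in\eta_G(P_G)\}$ of $G/[G,G]$; the $(G,P_G)$-component of the unit is the morphism given by $\eta_G$ (with restriction $P_G\to grp(\eta_G(P_G))$, $p\mapsto\eta_G(p)$).
   Context: A preordered group is a pair $(G,P_G)$ with $G$ an additively written group (not necessarily abelian) and $P_G\subseteq G$ a submonoid closed under conjugation; morphisms $(G,P_G)\to(H,P_H)$ are group homomorphisms $f$ with $f(P_G)\subseteq P_H$. This is the category $\mathsf{PreOrdGrp}$. For a commutative monoid $M$, $grp(M)$ denotes its group completion; for a submonoid $M$ of an abelian group $X$ it is isomorphic to the subgroup $\{a-b : a,b\in M\}$ of $X$. *)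

theory Defs
  imports "HOL-Algebra.Algebra"
begin

definition preord_group :: "('a, 'm) monoid_scheme \<Rightarrow> 'a set \<Rightarrow> bool" where
  "preord_group G P \<longleftrightarrow> group G \<and> P \<subseteq> carrier G \<and> \<one>\<^bsub>G\<^esub> \<in> P
     \<and> (\<forall>x\<in>P. \<forall>y\<in>P. x \<otimes>\<^bsub>G\<^esub> y \<in> P)
     \<and> (\<forall>g\<in>carrier G. \<forall>p\<in>P. g \<otimes>\<^bsub>G\<^esub> p \<otimes>\<^bsub>G\<^esub> inv\<^bsub>G\<^esub> g \<in> P)"

definition preord_hom :: "('a, 'm) monoid_scheme \<Rightarrow> 'a set \<Rightarrow> ('b, 'n) monoid_scheme \<Rightarrow> 'b set
    \<Rightarrow> ('a \<Rightarrow> 'b) \<Rightarrow> bool" where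
  "preord_hom G P H Q f \<longleftrightarrow> f \<in> hom G H \<and> f ` P \<subseteq> Q"

definition mono_ab :: "('a, 'm) monoid_scheme \<Rightarrow> 'a set \<Rightarrow> bool" where
  "mono_ab G P \<longleftrightarrow> preord_group G P \<and> comm_group G \<and> subgroup P G"

definition abelianization :: "('a, 'm) monoid_scheme \<Rightarrow> 'a set monoid" where
  "abelianization G = G Mod (derived G (carrier G))"

definition ab_quot :: "('a, 'm) monoid_scheme \<Rightarrow> 'a \<Rightarrow> 'a set" where
  "ab_quot G x = r_coset G (derived G (carrier G)) x"

text \<open>Group completion of a submonoid M of an abelian group X, realised as
{a - b : a, b in M} (multiplicatively: a * b^-1).\<close>
definition grp_of :: "('a, 'm) monoid_scheme \<Rightarrow> 'a set \<Rightarrow> 'a set" where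
  "grp_of K S = {u \<otimes>\<^bsub>K\<^esub> inv\<^bsub>K\<^esub> v | u v. u \<in> S \<and> v \<in> S}"

definition F_cone :: "('a, 'm) monoid_scheme \<Rightarrow> 'a set \<Rightarrow> 'a set set" where
  "F_cone G P = grp_of (abelianization G) (ab_quot G ` P)"

end

theory Submission
  imports Defs
begin

lemma grp_of_subgroup:
  fixes K (structure)
  assumes K: "comm_group K" and S: "S \<subseteq> carrier K" "\<one>\<^bsub>K\<^esub> \<in> S"
    and cl: "\<And>x y. x \<in> S \<Longrightarrow> y \<in> S \<Longrightarrow> x \<otimes>\<^bsub>K\<^esub> y \<in> S"
  shows "subgroup (grp_of K S) K"
proof -
  interpret comm_group K by (rule K)
  show ?thesis
  proof (rule subgroupI)
    show "grp_of K S \<subseteq> carrier K" using S by (auto simp: grp_of_def)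
    show "grp_of K S \<noteq> {}" using S unfolding grp_of_def by blast
  next
    fix a assume "a \<in> grp_of K S"
    then obtain u v where uv: "u \<in> S" "v \<in> S" "a = u \<otimes> inv v" by (auto simp: grp_of_def)
    have "inv a = v \<otimes> inv u" using uv S
      by (simp add: inv_mult_group subsetD m_comm)
    then show "inv a \<in> grp_of K S" using uv unfolding grp_of_def by blast
  next
    fix a b assume "a \<in> grp_of K S" "b \<in> grp_of K S"
    then obtain u v u' v' where uv: "u \<in> S" "v \<in> S" "a = u \<otimes> inv v"
      "u' \<in> S" "v' \<in> S" "b = u' \<otimes> inv v'" by (auto simp: grp_of_def)
    have c: "u \<in> carrier K" "v \<in> carrier K" "u' \<in> carrier K" "v' \<in> carrier K" using uv S by auto
    have "a \<otimes> b = (u \<otimes> u') \<otimes> inv (v \<otimes> v')" using c uv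
      by (simp add: inv_mult m_ac)
    then show "a \<otimes> b \<in> grp_of K S" using uv cl unfolding grp_of_def by blast
  qed
qed

theorem proposition5p1:
  fixes G :: "('a, 'm) monoid_scheme" and P :: "'a set"
  assumes "preord_group G P"
  shows "mono_ab (abelianization G) (F_cone G P)
    \<and> preord_hom G P (abelianization G) (F_cone G P) (ab_quot G)
    \<and> (\<forall>(H :: ('b, 'n) monoid_scheme) Q f. mono_ab H Q \<longrightarrow> preord_hom G P H Q f \<longrightarrow>
         (\<exists>g. preord_hom (abelianization G) (F_cone G P) H Q g
              \<and> (\<forall>x\<in>carrier G. g (ab_quot G x) = f x)
              \<and> (\<forall>g'. preord_hom (abelianization G) (F_cone G P) H Q g'
                     \<and> (\<forall>x\<in>carrier G. g' (ab_quot G x) = f x)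
                     \<longrightarrow> (\<forall>y\<in>carrier (abelianization G). g' y = g y))))"
proof -
  have grp: "group G" and PG: "P \<subseteq> carrier G" and P1: "\<one>\<^bsub>G\<^esub> \<in> P"
    and Pm: "\<And>x y. x \<in> P \<Longrightarrow> y \<in> P \<Longrightarrow> x \<otimes>\<^bsub>G\<^esub> y \<in> P"
    using assms unfolding preord_group_def by auto
  interpret G: group G by (rule grp)
  define N where "N = derived G (carrier G)"
  define A where "A = abelianization G"
  define q where "q = ab_quot G"
  have nN: "N \<lhd> G" unfolding N_def by (rule G.derived_self_is_normal)
  interpret nN: normal N G by (rule nN)
  have Acomm: "comm_group A" unfolding A_def abelianization_def
    using G.derived_quot_is_comm_group .
  interpret A: comm_group A by (rule Acomm)
  have qhom: "q \<in> hom G A" unfolding q_def A_def ab_quot_def abelianization_def N_def[symmetric]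
    using nN.r_coset_hom_Mod by simp
  interpret qh: group_hom G A q by (unfold_locales) (rule qhom)
  have q1: "q \<one>\<^bsub>G\<^esub> = \<one>\<^bsub>A\<^esub>" by simp
  have carrA: "carrier A = q ` carrier G"
    unfolding A_def abelianization_def q_def ab_quot_def by (simp add: carrier_FactGroup)
  have FC: "F_cone G P = grp_of A (q ` P)" unfolding F_cone_def A_def q_def by simp
  have sub: "subgroup (F_cone G P) A" unfolding FC
  proof (rule grp_of_subgroup[OF Acomm])
    show "q ` P \<subseteq> carrier A" using PG by auto
    show "\<one>\<^bsub>A\<^esub> \<in> q ` P" using P1 q1 by force
    fix x y assume "x \<in> q ` P" "y \<in> q ` P"
    then obtain a b where "a \<in> P" "b \<in> P" "x = q a" "y = q b" by auto
    then show "x \<otimes>\<^bsub>A\<^esub> y \<in> q ` P" using Pm PG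
      by (metis image_eqI qh.hom_mult subsetD)
  qed
  interpret sub: subgroup "F_cone G P" A by (rule sub)
  have part1: "mono_ab A (F_cone G P)"
    unfolding mono_ab_def preord_group_def
  proof (intro conjI ballI)
    fix g p assume "g \<in> carrier A" "p \<in> F_cone G P"
    then show "g \<otimes>\<^bsub>A\<^esub> p \<otimes>\<^bsub>A\<^esub> inv\<^bsub>A\<^esub> g \<in> F_cone G P"
      using A.m_comm A.m_assoc A.r_inv A.r_one
      by (metis A.inv_closed A.m_lcomm sub.mem_carrier)
  qed (auto simp: A.is_group Acomm sub sub.one_closed sub.m_closed)
  have part2: "preord_hom G P A (F_cone G P) q"
    unfolding preord_hom_def
  proof (intro conjI qhom subsetI)
    fix x assume "x \<in> q ` P"
    then obtain p where p: "p \<in> P" "x = q p" by auto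
    have "x = q p \<otimes>\<^bsub>A\<^esub> inv\<^bsub>A\<^esub> (q \<one>\<^bsub>G\<^esub>)" using p PG by auto
    then show "x \<in> F_cone G P" unfolding FC grp_of_def using p P1 by blast
  qed
  have part3: "\<exists>g. preord_hom A (F_cone G P) H Q g
              \<and> (\<forall>x\<in>carrier G. g (q x) = f x)
              \<and> (\<forall>g'. preord_hom A (F_cone G P) H Q g'
                     \<and> (\<forall>x\<in>carrier G. g' (q x) = f x)
                     \<longrightarrow> (\<forall>y\<in>carrier A. g' y = g y))"
    if H: "mono_ab H Q" and f: "preord_hom G P H Q f" for H :: "('b, 'n) monoid_scheme" and Q f
  proof -
    have Hc: "comm_group H" and Qs: "subgroup Q H" using H unfolding mono_ab_def by auto
    interpret H: comm_group H by (rule Hc)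
    interpret Q: subgroup Q H by (rule Qs)
    have fhom: "f \<in> hom G H" and fP: "f ` P \<subseteq> Q" using f unfolding preord_hom_def by auto
    interpret fh: group_hom G H f by unfold_locales (rule fhom)
    have "N \<subseteq> kernel G H f" unfolding N_def derived_def
    proof (rule G.generate_subgroup_incl)
      show "derived_set G (carrier G) \<subseteq> kernel G H f"
      proof
        fix a assume "a \<in> derived_set G (carrier G)"
        then obtain k1 k2 where k: "k1 \<in> carrier G" "k2 \<in> carrier G"
          "a = k1 \<otimes>\<^bsub>G\<^esub> k2 \<otimes>\<^bsub>G\<^esub> inv\<^bsub>G\<^esub> k1 \<otimes>\<^bsub>G\<^esub> inv\<^bsub>G\<^esub> k2" by auto
        have "f a = f k1 \<otimes>\<^bsub>H\<^esub> f k2 \<otimes>\<^bsub>H\<^esub> inv\<^bsub>H\<^esub> (f k1) \<otimes>\<^bsub>H\<^esub> inv\<^bsub>H\<^esub> (f k2)"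
          using k by simp
        also have "\<dots> = \<one>\<^bsub>H\<^esub>" using k
        proof -
          have c: "f k1 \<in> carrier H" "f k2 \<in> carrier H" using k by auto
          have "f k1 \<otimes>\<^bsub>H\<^esub> f k2 \<otimes>\<^bsub>H\<^esub> inv\<^bsub>H\<^esub> (f k1) \<otimes>\<^bsub>H\<^esub> inv\<^bsub>H\<^esub> (f k2)
              = (f k1 \<otimes>\<^bsub>H\<^esub> inv\<^bsub>H\<^esub> (f k1)) \<otimes>\<^bsub>H\<^esub> (f k2 \<otimes>\<^bsub>H\<^esub> inv\<^bsub>H\<^esub> (f k2))"
            using c by (metis H.inv_closed H.m_assoc H.m_closed H.m_comm)
          then show ?thesis using c by simp
        qed
        finally show "a \<in> kernel G H f" using k by (simp add: kernel_def)
      qed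
      show "subgroup (kernel G H f) G" by (rule fh.subgroup_kernel)
    qed
    then obtain g where ghom: "g \<in> hom A H" and gq: "\<And>x. x \<in> carrier G \<Longrightarrow> g (q x) = f x"
      using fh.FactGroup_universal_kernel[OF nN] unfolding A_def abelianization_def q_def ab_quot_def N_def
      by metis
    interpret gh: group_hom A H g by unfold_locales (rule ghom)
    show ?thesis
    proof (intro exI conjI allI impI ballI)
      show "preord_hom A (F_cone G P) H Q g" unfolding preord_hom_def
      proof (intro conjI ghom subsetI)
        fix y assume "y \<in> g ` F_cone G P"
        then obtain u v where uv: "u \<in> P" "v \<in> P" "y = g (q u \<otimes>\<^bsub>A\<^esub> inv\<^bsub>A\<^esub> q v)"
          unfolding FC grp_of_def by blast
        have "y = f u \<otimes>\<^bsub>H\<^esub> inv\<^bsub>H\<^esub> f v" using uv PG gq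
          by (simp add: subsetD)
        then show "y \<in> Q" using uv fP by auto
      qed
      show "\<And>x. x \<in> carrier G \<Longrightarrow> g (q x) = f x" by (rule gq)
      fix g' y assume g': "preord_hom A (F_cone G P) H Q g' \<and> (\<forall>x\<in>carrier G. g' (q x) = f x)"
        and y: "y \<in> carrier A"
      then obtain x where "x \<in> carrier G" "y = q x" using carrA by auto
      then show "g' y = g y" using g' gq by simp
    qed
  qed
  show ?thesis using part1 part2 part3 unfolding A_def q_def by blast
qed

end
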